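(* Let $r\ge 2$ and $n=3(r-1)$. Then there exist an $n$-partite quantum state, two two-outcome measurements for each party, and a linear output-input post-selection (functions $g_j(\mathbf{x},\mathbf{m}^{\setminus j})$) such that the post-selected correlator satisfies $p(1|\mathbf{x})=\delta^1_{f(\mathbf{x})}$ for all $\mathbf{x}\in\{0,1\}^r$, where $f(\mathbf{x})=\prod_{k=1}^r x_k$; i.e. this vertex of $\mathcal{P}_{\mathbf{x}}$ belongs to $\mathcal{Q}^n_{\mathbf{x},\mathbf{m}}$.
   Context: $(n,2,2)$ quantum Bell scenario: parties share a state $\rho$ on $\mathcal{H}_1\otimes\cdots\otimes\mathcal{H}_n$; party $j$ gets input $s_j\in\{0,1\}$, chosen uniformly and independently of everything else, performs a two-outcome POVM depending on $s_j$ and outputs $m_j\in\{0,1\}$, with $p(\mathbf{m}|\mathbf{s})=\mathrm{Tr}[\rho\bigotimes_j E^{(j)}_{m_j|s_j}]$. An experimenter holds $\mathbf{x}\in\{0,1\}^r$. Linear output-input post-selection: fix, for each $j$, a linear Boolean function $g_j$ (of the form $\bigoplus a_k y_k\oplus b$) of the bits of $\mathbf{x}$ and of $\mathbf{m}^{\setminus j}=(m_i)_{i\ne j}$; the post-selected correlator is $p(1|\mathbf{x})=\Pr[\bigoplus_j m_j=1\mid s_j=g_j(\mathbf{x},\mathbf{m}^{\setminus j})\ \forall j]$. $\mathcal{P}_{\mathbf{x}}$ is the convex hull of vectors $(\delta^1_{F(\mathbf{x})})_{\mathbf{x}}$ over all Boolean $F$, and $\mathcal{Q}^n_{\mathbf{x},\mathbf{m}}$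 is the set of post-selected quantum correlator vectors obtainable with $n$ parties and such post-selections. *)

theory Defs
  imports "Jordan_Normal_Form.Matrix" "Jordan_Normal_Form.Conjugate"
begin

definition mtrace :: "complex mat \<Rightarrow> complex" where
  "mtrace A = (\<Sum>i<dim_row A. A $$ (i, i))"

definition psd :: "nat \<Rightarrow> complex mat \<Rightarrow> bool" where
  "psd d A \<longleftrightarrow> A \<in> carrier_mat d d
     \<and> (\<forall>i<d. \<forall>j<d. A $$ (i, j) = cnj (A $$ (j, i)))
     \<and> (\<forall>v \<in> carrier_vec d. Im (conjugate v \<bullet> (A *\<^sub>v v)) = 0
                              \<and> Re (conjugate v \<bullet> (A *\<^sub>v v)) \<ge> 0)"

definition density :: "nat \<Rightarrow> complex mat \<Rightarrow> bool" where
  "density d \<rho> \<longleftrightarrow> psd d \<rho> \<and> mtrace \<rho> = 1"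

definition povm2 :: "nat \<Rightarrow> (bool \<Rightarrow> complex mat) \<Rightarrow> bool" where
  "povm2 d E \<longleftrightarrow> psd d (E False) \<and> psd d (E True) \<and> E False + E True = 1\<^sub>m d"

definition kron :: "complex mat \<Rightarrow> complex mat \<Rightarrow> complex mat" where
  "kron A B = mat (dim_row A * dim_row B) (dim_col A * dim_col B)
     (\<lambda>(i, j). A $$ (i div dim_row B, j div dim_col B) * B $$ (i mod dim_row B, j mod dim_col B))"

(* Tensor product of a list of matrices (first factor = first party) *)
fun kron_list :: "complex mat list \<Rightarrow> complex mat" where
  "kron_list [] = 1\<^sub>m 1"
| "kron_list (A # As) = kron A (kron_list As)"

(* Bits are booleans: True = 1, False = 0.  Parity (XOR) of P over a finite set. *)
definition xor_over :: "nat set \<Rightarrow> (nat \<Rightarrow> bool) \<Rightarrow> bool" where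
  "xor_over A P = odd (card {i \<in> A. P i})"

definition lin_g :: "nat \<Rightarrow> nat \<Rightarrow> nat \<Rightarrow> (nat \<Rightarrow> bool) \<Rightarrow> (nat \<Rightarrow> bool) \<Rightarrow> bool
                      \<Rightarrow> bool list \<Rightarrow> bool list \<Rightarrow> bool" where
  "lin_g r n j a c b x m =
     ((xor_over {..<r} (\<lambda>k. a k \<and> x ! k) \<noteq> xor_over ({..<n} - {j}) (\<lambda>i. c i \<and> m ! i)) \<noteq> b)"

(* Born rule: p(m|s) = Tr[\<rho> \<otimes>_j E_j(m_j|s_j)];  E j s m is E^{(j)}_{m|s} *)
definition qprob :: "nat \<Rightarrow> complex mat \<Rightarrow> (nat \<Rightarrow> bool \<Rightarrow> bool \<Rightarrow> complex mat)
                      \<Rightarrow> bool list \<Rightarrow> bool list \<Rightarrow> real" where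
  "qprob n \<rho> E m s = Re (mtrace (\<rho> * kron_list (map (\<lambda>j. E j (s ! j) (m ! j)) [0..<n])))"

definition bitstrings :: "nat \<Rightarrow> bool list set" where
  "bitstrings n = {m. length m = n}"

(* Probability (w.r.t. uniform independent inputs s) of the post-selection event
   s_j = g_j(x, m^{\<setminus>j}) for all j, together with an extra event on m *)
definition postsel_prob :: "nat \<Rightarrow> complex mat \<Rightarrow> (nat \<Rightarrow> bool \<Rightarrow> bool \<Rightarrow> complex mat)
    \<Rightarrow> (nat \<Rightarrow> bool list \<Rightarrow> bool list \<Rightarrow> bool) \<Rightarrow> bool list \<Rightarrow> (bool list \<Rightarrow> bool) \<Rightarrow> real" where
  "postsel_prob n \<rho> E g x Q =
     (\<Sum>s\<in>bitstrings n. \<Sum>m\<in>bitstrings n.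
        (if Q m \<and> (\<forall>j<n. s ! j = g j x m) then qprob n \<rho> E m s / 2 ^ n else 0))"

definition postsel_corr :: "nat \<Rightarrow> complex mat \<Rightarrow> (nat \<Rightarrow> bool \<Rightarrow> bool \<Rightarrow> complex mat)
    \<Rightarrow> (nat \<Rightarrow> bool list \<Rightarrow> bool list \<Rightarrow> bool) \<Rightarrow> bool list \<Rightarrow> real" where
  "postsel_corr n \<rho> E g x =
     postsel_prob n \<rho> E g x (\<lambda>m. xor_over {..<n} (\<lambda>i. m ! i))
     / postsel_prob n \<rho> E g x (\<lambda>m. True)"

end

theory Submission
  imports Defs
begin


definition diagm :: "nat \<Rightarrow> (nat \<Rightarrow> complex) \<Rightarrow> complex mat" where
  "diagm N f = mat N N (\<lambda>(i,j). if i = j then f i else 0)"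

lemma diagm_carrier[simp]: "diagm N f \<in> carrier_mat N N"
  by (simp add: diagm_def)

lemma diagm_dim[simp]: "dim_row (diagm N f) = N" "dim_col (diagm N f) = N"
  by (simp_all add: diagm_def)

lemma cnj_mult_self: "cnj z * z = complex_of_real ((cmod z)\<^sup>2)"
  by (metis complex_norm_square mult.commute)

lemma diagm_mult_vec: "v \<in> carrier_vec N \<Longrightarrow> i < N \<Longrightarrow> (diagm N f *\<^sub>v v) $ i = f i * v $ i"
proof -
  assume v: "v \<in> carrier_vec N" and i: "i < N"
  have "(diagm N f *\<^sub>v v) $ i = (\<Sum>k\<in>{0..<N}. (if i = k then f i else 0) * v $ k)"
    using v i by (simp add: diagm_def mult_mat_vec_def scalar_prod_def row_def)
  also have "\<dots> = f i * v $ i" using i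
    by (simp add: if_distrib[of "\<lambda>t. t * _"] sum.delta cong: if_cong)
  finally show ?thesis .
qed

lemma quad_diagm:
  assumes v: "v \<in> carrier_vec N" and f: "\<And>i. i < N \<Longrightarrow> f i = complex_of_real (p i)"
  shows "conjugate v \<bullet> (diagm N f *\<^sub>v v) = (\<Sum>i\<in>{0..<N}. complex_of_real (p i * (cmod (v $ i))\<^sup>2))"
  unfolding scalar_prod_def
proof (intro sum.cong)
  fix i assume "i \<in> {0..<N}"
  then have i: "i < N" by simp
  have "conjugate v $ i * (diagm N f *\<^sub>v v) $ i = complex_of_real (p i) * (cnj (v $ i) * v $ i)"
    using diagm_mult_vec[OF v i, of f] f[OF i] i v by simp
  also have "\<dots> = complex_of_real (p i * (cmod (v $ i))\<^sup>2)" by (simp only: cnj_mult_self of_real_mult)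
  finally show "conjugate v $ i * (diagm N f *\<^sub>v v) $ i = complex_of_real (p i * (cmod (v $ i))\<^sup>2)" .
qed simp

lemma psd_diagm:
  assumes "\<And>i. i < N \<Longrightarrow> f i = complex_of_real (p i)" "\<And>i. i < N \<Longrightarrow> p i \<ge> 0"
  shows "psd N (diagm N f)"
  unfolding psd_def
proof (intro conjI ballI allI impI)
  show "diagm N f \<in> carrier_mat N N" by simp
next
  fix i j assume "i < N" "j < N"
  then show "diagm N f $$ (i, j) = cnj (diagm N f $$ (j, i))"
    using assms by (auto simp: diagm_def)
next
  fix v :: "complex vec" assume v: "v \<in> carrier_vec N"
  have e: "conjugate v \<bullet> (diagm N f *\<^sub>v v) = (\<Sum>i\<in>{0..<N}. complex_of_real (p i * (cmod (v $ i))\<^sup>2))"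
    using quad_diagm[OF v, of f p] assms(1) by blast
  show "Im (conjugate v \<bullet> (diagm N f *\<^sub>v v)) = 0" unfolding e by (simp add: Im_sum)
next
  fix v :: "complex vec" assume v: "v \<in> carrier_vec N"
  have e: "conjugate v \<bullet> (diagm N f *\<^sub>v v) = (\<Sum>i\<in>{0..<N}. complex_of_real (p i * (cmod (v $ i))\<^sup>2))"
    using quad_diagm[OF v, of f p] assms(1) by blast
  show "Re (conjugate v \<bullet> (diagm N f *\<^sub>v v)) \<ge> 0" unfolding e using assms(2)
    by (simp add: Re_sum) (intro sum_nonneg mult_nonneg_nonneg; simp)
qed

lemma mtrace_diagm_mult:
  assumes "K \<in> carrier_mat N N"
  shows "mtrace (diagm N f * K) = (\<Sum>i<N. f i * K $$ (i, i))"
proof -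
  have "(diagm N f * K) $$ (i, i) = f i * K $$ (i, i)" if "i < N" for i
  proof -
    have "(diagm N f * K) $$ (i, i) = (\<Sum>k\<in>{0..<N}. (if i = k then f i else 0) * K $$ (k, i))"
      using assms that by (simp add: diagm_def times_mat_def scalar_prod_def row_def col_def)
    also have "\<dots> = f i * K $$ (i, i)" using that
      by (simp add: if_distrib[of "\<lambda>t. t * _"] sum.delta cong: if_cong)
    finally show ?thesis .
  qed
  then show ?thesis using assms by (simp add: mtrace_def)
qed

fun bits :: "nat \<Rightarrow> nat \<Rightarrow> bool list" where
  "bits 0 i = []"
| "bits (Suc n) i = (2^n \<le> i) # bits n (i mod 2^n)"

definition bidx :: "bool \<Rightarrow> nat" where "bidx b = (if b then 1 else 0)"

lemma kron_list_diag:
  assumes "\<And>A. A \<in> set Es \<Longrightarrow> A \<in> carrier_mat 2 2"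
  shows "kron_list Es \<in> carrier_mat (2 ^ length Es) (2 ^ length Es)
    \<and> (\<forall>i < 2 ^ length Es. kron_list Es $$ (i, i)
          = (\<Prod>j<length Es. (Es ! j) $$ (bidx (bits (length Es) i ! j), bidx (bits (length Es) i ! j))))"
  using assms
proof (induction Es)
  case Nil
  then show ?case by simp
next
  case (Cons A Es)
  let ?k = "length Es"
  from Cons have IH: "kron_list Es \<in> carrier_mat (2 ^ ?k) (2 ^ ?k)"
    "\<And>i. i < 2 ^ ?k \<Longrightarrow> kron_list Es $$ (i, i)
          = (\<Prod>j<?k. (Es ! j) $$ (bidx (bits ?k i ! j), bidx (bits ?k i ! j)))" by auto
  have A: "A \<in> carrier_mat 2 2" using Cons.prems by auto
  have car: "kron_list (A # Es) \<in> carrier_mat (2 ^ length (A#Es)) (2 ^ length (A#Es))"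
    using IH A by (simp add: kron_def)
  have "kron_list (A # Es) $$ (i, i)
          = (\<Prod>j<length (A#Es). ((A#Es) ! j) $$ (bidx (bits (length (A#Es)) i ! j), bidx (bits (length (A#Es)) i ! j)))"
    if i: "i < 2 ^ length (A#Es)" for i
  proof -
    have i2: "i < 2 * 2 ^ ?k" using i by simp
    have d: "i div 2 ^ ?k = bidx (2 ^ ?k \<le> i)"
      using i2 by (auto simp: bidx_def div_eq_0_iff le_div_geq intro: div_nat_eqI)
    have "kron_list (A # Es) $$ (i, i) = A $$ (i div 2 ^ ?k, i div 2 ^ ?k) * kron_list Es $$ (i mod 2 ^ ?k, i mod 2 ^ ?k)"
      using IH A i2 by (simp add: kron_def)
    also have "\<dots> = A $$ (bidx (2 ^ ?k \<le> i), bidx (2 ^ ?k \<le> i)) *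
        (\<Prod>j<?k. (Es ! j) $$ (bidx (bits ?k (i mod 2 ^ ?k) ! j), bidx (bits ?k (i mod 2 ^ ?k) ! j)))"
      using IH(2)[of "i mod 2 ^ ?k"] d by simp
    also have "\<dots> = (\<Prod>j<Suc ?k. ((A#Es) ! j) $$ (bidx (bits (Suc ?k) i ! j), bidx (bits (Suc ?k) i ! j)))"
      by (simp del: prod.lessThan_Suc add: prod.lessThan_Suc_shift)
    finally show ?thesis by simp
  qed
  with car show ?case by blast
qed



lemma sum_lessThan_double: "(\<Sum>i<(K::nat) + K. g i) = (\<Sum>i<K. g i) + (\<Sum>i<K. g (K + i))"
proof -
  have "(\<Sum>i<K + K. g i) = (\<Sum>i\<in>{0..<K}. g i) + (\<Sum>i\<in>{K..<K+K}. g i)"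
    by (simp add: atLeast0LessThan[symmetric] sum.atLeastLessThan_concat)
  also have "(\<Sum>i\<in>{K..<K+K}. g i) = (\<Sum>i\<in>{0..<K}. g (K + i))"
    using sum.shift_bounds_nat_ivl[of g 0 K K] by (simp add: add.commute)
  finally show ?thesis by (simp add: atLeast0LessThan)
qed

lemma finite_bitstrings[simp]: "finite (bitstrings n)"
proof -
  have "bitstrings n = {xs. set xs \<subseteq> (UNIV :: bool set) \<and> length xs = n}"
    by (simp add: bitstrings_def)
  then show ?thesis using finite_lists_length_eq[of "UNIV :: bool set" n] by simp
qed

lemma bitstrings_Suc: "bitstrings (Suc n) = Cons False ` bitstrings n \<union> Cons True ` bitstrings n"
  unfolding bitstrings_def
  by (auto simp: length_Suc_conv image_iff)

lemma sum_bitstrings_Suc: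
  "(\<Sum>l\<in>bitstrings (Suc n). f l) = (\<Sum>l\<in>bitstrings n. f (False # l) + f (True # l))"
  unfolding bitstrings_Suc
  by (subst sum.union_disjoint) (auto simp: sum.reindex sum.distrib)

lemma sum_bits: "(\<Sum>i<2 ^ n. f (bits n i)) = (\<Sum>l\<in>bitstrings n. f l)"
proof (induction n arbitrary: f)
  case 0
  then show ?case by (simp add: bitstrings_def)
next
  case (Suc n)
  have "(\<Sum>i<2 ^ Suc n. f (bits (Suc n) i)) = (\<Sum>i<2^n. f (bits (Suc n) i)) + (\<Sum>i<2^n. f (bits (Suc n) (2^n + i)))"
    using sum_lessThan_double[of "\<lambda>i. f (bits (Suc n) i)" "2^n"] by (simp add: mult_2)
  also have "(\<Sum>i<2^n. f (bits (Suc n) i)) = (\<Sum>i<2^n. f (False # bits n i))"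
    by (intro sum.cong) auto
  also have "(\<Sum>i<2^n. f (bits (Suc n) (2^n + i))) = (\<Sum>i<2^n. f (True # bits n i))"
    by (intro sum.cong) auto
  finally show ?case using Suc.IH[of "\<lambda>l. f (False # l)"] Suc.IH[of "\<lambda>l. f (True # l)"]
    by (simp add: sum_bitstrings_Suc sum.distrib)
qed



definition okr :: "nat \<Rightarrow> bool \<Rightarrow> bool \<Rightarrow> bool \<Rightarrow> bool" where
  "okr j l s mm = (if j mod 3 = 0 then (if l then mm = s else \<not> mm)
     else if j mod 3 = 1 then (if l then mm \<noteq> s else mm = s) else mm = s)"

definition Emat :: "nat \<Rightarrow> bool \<Rightarrow> bool \<Rightarrow> complex mat" where
  "Emat j s mm = diagm 2 (\<lambda>i. if okr j (i \<noteq> 0) s mm then 1 else 0)"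

definition Pl :: "nat \<Rightarrow> bool list \<Rightarrow> real" where
  "Pl q l = (\<Prod>i<q. if l ! (3*i) = l ! (3*i+1) then 1/4 else 0)"

definition rho :: "nat \<Rightarrow> nat \<Rightarrow> complex mat" where
  "rho n q = diagm (2^n) (\<lambda>i. complex_of_real (Pl q (bits n i)))"

definition aa :: "nat \<Rightarrow> nat \<Rightarrow> bool" where
  "aa j k = (if j mod 3 = 0 then j = 0 \<and> k = 0 else if j mod 3 = 1 then k = j div 3 + 1 else False)"

definition cc :: "nat \<Rightarrow> nat \<Rightarrow> bool" where
  "cc j l = (if j mod 3 = 0 then l < j else if j mod 3 = 1 then l = j + 1 else l = j - 1)"

definition bb :: "nat \<Rightarrow> bool" where
  "bb j = (j mod 3 = 1 \<and> j div 3 \<noteq> 0)"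

lemma ex0: "okr j l s False \<noteq> okr j l s True"
  unfolding okr_def by auto

lemma ex: "(if okr j l s False then 1 else 0) + (if okr j l s True then 1 else 0) = (1::complex)"
  using ex0[of j l s] by (cases "okr j l s False") auto

lemma Emat_diag: "Emat j s mm $$ (bidx b, bidx b) = (if okr j b s mm then 1 else 0)"
  by (cases b) (simp_all add: Emat_def diagm_def bidx_def)

lemma povm_Emat: "povm2 2 (Emat j s)"
proof -
  have ps: "psd 2 (Emat j s mm)" for mm
    unfolding Emat_def
    by (rule psd_diagm[where p = "\<lambda>i. if okr j (i \<noteq> 0) s mm then 1 else 0"]) auto
  have "Emat j s False + Emat j s True = 1\<^sub>m 2"
  proof (rule eq_matI)
    fix i k assume "i < dim_row (1\<^sub>m 2 :: complex mat)" "k < dim_col (1\<^sub>m 2 :: complex mat)"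
    then have ik: "i < 2" "k < 2" by auto
    show "(Emat j s False + Emat j s True) $$ (i, k) = 1\<^sub>m 2 $$ (i, k)"
      using ik ex[of j "0 < i" s] ex0[of j "0 < k" s] by (simp add: Emat_def diagm_def)
  qed (simp_all add: Emat_def)
  then show ?thesis using ps by (simp add: povm2_def)
qed

lemma Pl_nonneg: "Pl q l \<ge> 0"
  unfolding Pl_def by (intro prod_nonneg) auto

lemma Pl_Cons3: "Pl (Suc q) (a # b # c # l) = (if a = b then 1/4 else 0) * Pl q l"
proof -
  have "(a # b # c # l) ! (3 * Suc i) = l ! (3 * i)" for i
    by (simp add: numeral_3_eq_3)
  moreover have "(a # b # c # l) ! (3 * Suc i + 1) = l ! (3 * i + 1)" for i
    by (simp add: numeral_3_eq_3)
  ultimately show ?thesis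
    unfolding Pl_def by (simp del: prod.lessThan_Suc add: prod.lessThan_Suc_shift)
qed

lemma sum_Pl: "(\<Sum>l\<in>bitstrings (3*q). Pl q l) = 1"
proof (induction q)
  case 0
  then show ?case by (simp add: Pl_def bitstrings_def)
next
  case (Suc q)
  have e: "3 * Suc q = Suc (Suc (Suc (3 * q)))" by simp
  have "(\<Sum>l\<in>bitstrings (3 * Suc q). Pl (Suc q) l) = (\<Sum>l\<in>bitstrings (3*q).
        ((Pl (Suc q) (False#False#False#l) + Pl (Suc q) (True#False#False#l)) + (Pl (Suc q) (False#True#False#l) + Pl (Suc q) (True#True#False#l)))
      + ((Pl (Suc q) (False#False#True#l) + Pl (Suc q) (True#False#True#l)) + (Pl (Suc q) (False#True#True#l) + Pl (Suc q) (True#True#True#l))))"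
    unfolding e by (simp only: sum_bitstrings_Suc)
  also have "\<dots> = (\<Sum>l\<in>bitstrings (3*q). Pl q l)"
    by (intro sum.cong refl) (simp only: Pl_Cons3, simp)
  finally have "(\<Sum>l\<in>bitstrings (3 * Suc q). Pl (Suc q) l) = (\<Sum>l\<in>bitstrings (3*q). Pl q l)" .
  then show ?case using Suc.IH by simp
qed

lemma density_rho: "density (2^(3*q)) (rho (3*q) q)"
proof -
  have "psd (2^(3*q)) (rho (3*q) q)"
    unfolding rho_def by (rule psd_diagm[where p = "\<lambda>i. Pl q (bits (3*q) i)"]) (auto simp: Pl_nonneg)
  moreover have "mtrace (rho (3*q) q) = 1"
  proof -
    have "mtrace (rho (3*q) q) = (\<Sum>i<2^(3*q). complex_of_real (Pl q (bits (3*q) i)))"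
      by (simp add: mtrace_def rho_def diagm_def)
    also have "\<dots> = complex_of_real (\<Sum>l\<in>bitstrings (3*q). Pl q l)"
      by (simp add: sum_bits[of "\<lambda>l. complex_of_real (Pl q l)"])
    finally show ?thesis by (simp add: sum_Pl)
  qed
  ultimately show ?thesis by (simp add: density_def)
qed

lemma prod_ind: "(\<Prod>j<(n::nat). (if P j then 1 else 0 :: 'a::comm_semiring_1)) = (if \<forall>j<n. P j then 1 else 0)"
  by (induction n) (auto simp: less_Suc_eq)

lemma qprob_eq:
  "qprob n (rho n q) Emat m s = (\<Sum>l\<in>bitstrings n. Pl q l * (if \<forall>j<n. okr j (l!j) (s!j) (m!j) then 1 else 0))"
proof -
  let ?Es = "map (\<lambda>j. Emat j (s!j) (m!j)) [0..<n]"
  have kd: "kron_list ?Es \<in> carrier_mat (2^n) (2^n) \<and> (\<forall>i<2^n. kron_list ?Es $$ (i,i) = (\<Prod>j<n. (?Es!j) $$ (bidx (bits n i ! j), bidx (bits n i ! j))))"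
  proof -
    have "kron_list ?Es \<in> carrier_mat (2 ^ length ?Es) (2 ^ length ?Es)
    \<and> (\<forall>i < 2 ^ length ?Es. kron_list ?Es $$ (i, i)
          = (\<Prod>j<length ?Es. (?Es ! j) $$ (bidx (bits (length ?Es) i ! j), bidx (bits (length ?Es) i ! j))))"
      by (rule kron_list_diag) (auto simp: Emat_def)
    then show ?thesis by simp
  qed
  have K: "kron_list ?Es \<in> carrier_mat (2^n) (2^n)" using kd by simp
  have Kd: "kron_list ?Es $$ (i, i) = (if \<forall>j<n. okr j (bits n i ! j) (s!j) (m!j) then 1 else 0)"
    if "i < 2^n" for i
  proof -
    have "kron_list ?Es $$ (i, i) = (\<Prod>j<n. (?Es ! j) $$ (bidx (bits n i ! j), bidx (bits n i ! j)))"
      using kd that by simp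
    also have "\<dots> = (\<Prod>j<n. if okr j (bits n i ! j) (s!j) (m!j) then 1 else 0)"
      by (intro prod.cong) (simp_all add: Emat_diag)
    finally show ?thesis by (simp add: prod_ind)
  qed
  have "mtrace (rho n q * kron_list ?Es) = (\<Sum>i<2^n. complex_of_real (Pl q (bits n i)) * kron_list ?Es $$ (i, i))"
    unfolding rho_def by (rule mtrace_diagm_mult[OF K])
  also have "\<dots> = (\<Sum>i<2^n. complex_of_real (Pl q (bits n i) * (if \<forall>j<n. okr j (bits n i ! j) (s!j) (m!j) then 1 else 0)))"
    by (intro sum.cong) (auto simp: Kd)
  also have "\<dots> = complex_of_real (\<Sum>l\<in>bitstrings n. Pl q l * (if \<forall>j<n. okr j (l!j) (s!j) (m!j) then 1 else 0))"
    by (simp only: sum_bits[of "\<lambda>l. complex_of_real (Pl q l * (if \<forall>j<n. okr j (l!j) (s!j) (m!j) then 1 else 0))"] of_real_sum)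
  finally show ?thesis by (simp add: qprob_def)
qed



lemma xor_Suc: "xor_over {..<Suc k} P = (xor_over {..<k} P \<noteq> P k)"
proof (cases "P k")
  case True
  then have "{i\<in>{..<Suc k}. P i} = insert k {i\<in>{..<k}. P i}" by (auto simp: less_Suc_eq)
  then show ?thesis using True by (simp add: xor_over_def)
next
  case False
  then have "{i\<in>{..<Suc k}. P i} = {i\<in>{..<k}. P i}" by (auto simp: less_Suc_eq)
  then show ?thesis using False by (simp add: xor_over_def)
qed

lemma md3[simp]: "Suc (3*i) mod 3 = 1" "Suc (Suc (3*i)) mod 3 = 2" "Suc (3*i) div 3 = i"
  "Suc (Suc (3*i)) div 3 = i" "(3*i) mod 3 = 0" "(3*i) div 3 = i"
  by presburger+

lemma xor_empty[simp]: "xor_over {} P = False"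
  by (simp add: xor_over_def)

lemma xor_False: "xor_over A (\<lambda>_. False) = False"
  by (simp add: xor_over_def)

lemma xor_single: "q \<in> A \<Longrightarrow> xor_over A (\<lambda>l. l = q \<and> P l) = P q"
proof -
  assume q: "q \<in> A"
  have "{l\<in>A. l = q \<and> P l} = (if P q then {q} else {})" using q by auto
  then show ?thesis by (simp add: xor_over_def)
qed

lemma xor_prefix: "j \<le> n \<Longrightarrow> xor_over ({..<n} - {j}) (\<lambda>l. l < j \<and> P l) = xor_over {..<j} P"
proof -
  assume "j \<le> n"
  then have "{l\<in>{..<n} - {j}. l < j \<and> P l} = {l\<in>{..<j}. P l}" by auto
  then show ?thesis by (simp add: xor_over_def)
qed

lemma G_A:
  assumes "i < r - 1" "2 \<le> r"
  shows "lin_g r (3*(r-1)) (3*i) (aa (3*i)) (cc (3*i)) (bb (3*i)) x m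
          = (if i = 0 then x!0 else xor_over {..<3*i} (\<lambda>l. m!l))"
proof (cases "i = 0")
  case True
  have a: "xor_over {..<r} (\<lambda>k. aa (3*i) k \<and> x ! k) = x!0"
    using True assms xor_single[of 0 "{..<r}" "\<lambda>k. x!k"] by (simp add: aa_def)
  have c: "xor_over ({..<3*(r-1)} - {3*i}) (\<lambda>l. cc (3*i) l \<and> m ! l) = False"
    using True by (simp add: cc_def xor_False)
  show ?thesis unfolding lin_g_def a c using True by (simp add: bb_def)
next
  case False
  have a: "xor_over {..<r} (\<lambda>k. aa (3*i) k \<and> x ! k) = False"
    using False by (simp add: aa_def xor_False)
  have c: "xor_over ({..<3*(r-1)} - {3*i}) (\<lambda>l. cc (3*i) l \<and> m ! l) = xor_over {..<3*i} (\<lambda>l. m!l)"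
    using assms xor_prefix[of "3*i" "3*(r-1)" "\<lambda>l. m!l"] by (simp add: cc_def)
  show ?thesis unfolding lin_g_def a c using False by (simp add: bb_def)
qed

lemma G_C:
  assumes "i < r - 1" "2 \<le> r"
  shows "lin_g r (3*(r-1)) (3*i+1) (aa (3*i+1)) (cc (3*i+1)) (bb (3*i+1)) x m
          = ((if i = 0 then x!1 else \<not> x!(i+1)) \<noteq> m!(3*i+2))"
proof -
  have md: "(3*i+1) mod 3 = 1" "(3*i+1) div 3 = i" by auto
  have a: "xor_over {..<r} (\<lambda>k. aa (3*i+1) k \<and> x ! k) = x!(i+1)"
    using assms xor_single[of "i+1" "{..<r}" "\<lambda>k. x!k"] by (simp add: aa_def md)
  have c: "xor_over ({..<3*(r-1)} - {3*i+1}) (\<lambda>l. cc (3*i+1) l \<and> m ! l) = m!(3*i+2)"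
    using assms xor_single[of "3*i+2" "{..<3*(r-1)} - {3*i+1}" "\<lambda>l. m!l"] by (simp add: cc_def md)
  show ?thesis unfolding lin_g_def a c by (auto simp: bb_def md)
qed

lemma G_B:
  assumes "i < r - 1" "2 \<le> r"
  shows "lin_g r (3*(r-1)) (3*i+2) (aa (3*i+2)) (cc (3*i+2)) (bb (3*i+2)) x m = m!(3*i+1)"
proof -
  have md: "(3*i+2) mod 3 = 2" "(3*i+2) div 3 = i" by auto
  have a: "xor_over {..<r} (\<lambda>k. aa (3*i+2) k \<and> x ! k) = False"
    by (simp add: aa_def md xor_False)
  have c: "xor_over ({..<3*(r-1)} - {3*i+2}) (\<lambda>l. cc (3*i+2) l \<and> m ! l) = m!(3*i+1)"
    using assms xor_single[of "3*i+1" "{..<3*(r-1)} - {3*i+2}" "\<lambda>l. m!l"] by (simp add: cc_def md)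
  show ?thesis unfolding lin_g_def a c by (simp add: bb_def md)
qed

lemma okr_A: "okr (3*i) l s mm = (if l then mm = s else \<not> mm)" by (simp add: okr_def)
lemma okr_C: "okr (Suc (3*i)) l s mm = (if l then mm \<noteq> s else mm = s)" by (simp add: okr_def)
lemma okr_B: "okr (Suc (Suc (3*i))) l s mm = (mm = s)" by (simp add: okr_def)

definition Rel :: "nat \<Rightarrow> bool list \<Rightarrow> bool list \<Rightarrow> bool list \<Rightarrow> nat \<Rightarrow> bool" where
  "Rel r x m l j = okr j (l!j) (lin_g r (3*(r-1)) j (aa j) (cc j) (bb j) x m) (m!j)"

lemma gadget:
  assumes "i < r - 1" "2 \<le> r" "Rel r x m l (3*i)" "Rel r x m l (3*i+1)" "Rel r x m l (3*i+2)"
    "l!(3*i) = l!(3*i+1)"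
  shows "m!(3*i+2) = m!(3*i+1) \<and> m!(3*i) = ((if i = 0 then x!0 else xor_over {..<3*i} (\<lambda>l. m!l))
      \<and> (if i = 0 then x!1 else \<not> x!(i+1)))"
proof -
  have A: "if l!(3*i) then m!(3*i) = (if i = 0 then x!0 else xor_over {..<3*i} (\<lambda>l. m!l)) else \<not> m!(3*i)"
    using assms(3) G_A[OF assms(1,2), of x m] by (simp add: Rel_def okr_A)
  have C: "if l!(3*i+1) then m!(3*i+1) \<noteq> ((if i = 0 then x!1 else \<not> x!(i+1)) \<noteq> m!(3*i+2))
      else m!(3*i+1) = ((if i = 0 then x!1 else \<not> x!(i+1)) \<noteq> m!(3*i+2))"
    using assms(4) G_C[OF assms(1,2), of x m] by (cases "l!(3*i+1)") (simp_all add: Rel_def okr_C)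
  have B: "m!(3*i+2) = m!(3*i+1)"
    using assms(5) G_B[OF assms(1,2), of x m] by (simp add: Rel_def okr_B)
  show ?thesis using A B C assms(6) by (auto split: if_splits)
qed

lemma xor3: "xor_over {..<3*Suc i} P = (((xor_over {..<3*i} P \<noteq> P (3*i)) \<noteq> P (Suc (3*i))) \<noteq> P (Suc (Suc (3*i))))"
proof -
  have e: "3 * Suc i = Suc (Suc (Suc (3*i)))" by simp
  show ?thesis unfolding e by (simp only: xor_Suc)
qed

lemma inv:
  assumes "2 \<le> r"
  shows "i \<le> r - 1 \<Longrightarrow> 0 < i \<Longrightarrow> (\<forall>j<3*i. Rel r x m l j) \<Longrightarrow> (\<forall>i'<i. l!(3*i') = l!(3*i'+1))
    \<Longrightarrow> xor_over {..<3*i} (\<lambda>l. m!l) = (\<forall>k\<le>i. x!k)"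
proof (induction i)
  case 0
  then show ?case by simp
next
  case (Suc i)
  have il: "i < r - 1" using Suc.prems by simp
  have g: "m!(3*i+2) = m!(3*i+1) \<and> m!(3*i) = ((if i = 0 then x!0 else xor_over {..<3*i} (\<lambda>l. m!l))
      \<and> (if i = 0 then x!1 else \<not> x!(i+1)))"
    by (rule gadget[OF il assms]) (use Suc.prems in auto)
  show ?case
  proof (cases "i = 0")
    case True
    have "(\<forall>k\<le>Suc 0. x!k) = (x!0 \<and> x!1)" by (auto simp: le_Suc_eq)
    then show ?thesis using g True xor3[of 0 "\<lambda>l. m!l"] by simp blast
  next
    case False
    have IH: "xor_over {..<3*i} (\<lambda>l. m!l) = (\<forall>k\<le>i. x!k)"
      using Suc.IH Suc.prems False by auto
    have "(\<forall>k\<le>Suc i. x!k) = ((\<forall>k\<le>i. x!k) \<and> x!(Suc i))" by (auto simp: le_Suc_eq)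
    then show ?thesis using g False IH xor3[of i "\<lambda>l. m!l"] by simp blast
  qed
qed



lemma exists_good:
  assumes r: "2 \<le> r"
  shows "\<exists>m l. length m = 3*(r-1) \<and> length l = 3*(r-1) \<and> (\<forall>j<3*(r-1). Rel r x m l j)
     \<and> (\<forall>i<r-1. l!(3*i) = l!(3*i+1))"
proof -
  define q where "q = r - 1"
  define y where "y i = (if i = 0 then x!1 else \<not> x!(i+1))" for i
  define A0 where "A0 i = (\<forall>k\<le>i. x!k)" for i
  define l0 where "l0 = map (\<lambda>j. if j mod 3 = 2 then False else y (j div 3)) [0..<3*q]"
  define m0 where "m0 = map (\<lambda>j. j mod 3 = 0 \<and> y (j div 3) \<and> A0 (j div 3)) [0..<3*q]"
  have lA: "l0!(3*i) = y i" "l0!(Suc (3*i)) = y i" "l0!(Suc (Suc (3*i))) = False"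
    and mA: "m0!(3*i) = (y i \<and> A0 i)" "m0!(Suc (3*i)) = False" "m0!(Suc (Suc (3*i))) = False"
    if "i < q" for i
    using that by (simp_all add: l0_def m0_def)
  have pairs: "\<forall>i<q. l0!(3*i) = l0!(3*i+1)" using lA by simp
  have main: "i \<le> q \<Longrightarrow> \<forall>j<3*i. Rel r x m0 l0 j" for i
  proof (induction i)
    case 0
    then show ?case by simp
  next
    case (Suc i)
    have iq: "i < q" using Suc.prems by simp
    have IH: "\<forall>j<3*i. Rel r x m0 l0 j" using Suc by simp
    have iq': "i < r - 1" using iq q_def by simp
    have U: "(if i = 0 then x!0 else xor_over {..<3*i} (\<lambda>l. m0!l)) = A0 i"
    proof (cases "i = 0")
      case True
      then show ?thesis by (simp add: A0_def)
    next
      case False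
      have "xor_over {..<3*i} (\<lambda>l. m0!l) = (\<forall>k\<le>i. x!k)"
        by (rule inv[OF r]) (use iq q_def False IH pairs in auto)
      then show ?thesis using False by (simp add: A0_def)
    qed
    have R0: "Rel r x m0 l0 (3*i)"
      using G_A[OF iq' r, of x m0] U lA[OF iq] mA[OF iq] by (simp add: Rel_def okr_A)
    have R1: "Rel r x m0 l0 (Suc (3*i))"
      using G_C[OF iq' r, of x m0] lA[OF iq] mA[OF iq] by (simp add: Rel_def okr_C y_def)
    have R2: "Rel r x m0 l0 (Suc (Suc (3*i)))"
      using G_B[OF iq' r, of x m0] mA[OF iq] by (simp add: Rel_def okr_B)
    show ?case
    proof (intro allI impI)
      fix j assume "j < 3 * Suc i"
      then have "j < 3*i \<or> j = 3*i \<or> j = Suc (3*i) \<or> j = Suc (Suc (3*i))" by auto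
      then show "Rel r x m0 l0 j" using IH R0 R1 R2 by auto
    qed
  qed
  have "length m0 = 3*(r-1)" "length l0 = 3*(r-1)" by (simp_all add: m0_def l0_def q_def)
  then show ?thesis using main[of q] pairs q_def by auto
qed

lemma Pl_nz: "Pl q l \<noteq> 0 \<Longrightarrow> \<forall>i<q. l!(3*i) = l!(3*i+1)"
  unfolding Pl_def by (auto simp: prod_zero_iff split: if_splits)

lemma Pl_pos: "\<forall>i<q. l!(3*i) = l!(3*i+1) \<Longrightarrow> Pl q l > 0"
  unfolding Pl_def by (intro prod_pos) auto

theorem lemma4p2p1:
  fixes r :: nat
  assumes "r \<ge> 2"
  defines "n \<equiv> 3 * (r - 1)"
  shows "\<exists>(d :: nat \<Rightarrow> nat) (\<rho> :: complex mat) (E :: nat \<Rightarrow> bool \<Rightarrow> bool \<Rightarrow> complex mat)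
           (a :: nat \<Rightarrow> nat \<Rightarrow> bool) (c :: nat \<Rightarrow> nat \<Rightarrow> bool) (b :: nat \<Rightarrow> bool).
     (\<forall>j<n. d j \<ge> 1)
     \<and> density (\<Prod>j<n. d j) \<rho>
     \<and> (\<forall>j<n. \<forall>s. povm2 (d j) (E j s))
     \<and> (\<forall>x \<in> bitstrings r.
          postsel_prob n \<rho> E (\<lambda>j. lin_g r n j (a j) (c j) (b j)) x (\<lambda>m. True) > 0
        \<and> postsel_corr n \<rho> E (\<lambda>j. lin_g r n j (a j) (c j) (b j)) x
            = (if (\<forall>k<r. x ! k) then 1 else 0))"
proof -
  define q where "q = r - 1"
  have nq: "n = 3 * q" by (simp add: n_def q_def)
  have q1: "0 < q" using assms q_def by simp
  let ?g = "\<lambda>j. lin_g r n j (aa j) (cc j) (bb j)"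
  have P2: "density (\<Prod>j<n. (\<lambda>_. 2::nat) j) (rho n q)"
    using density_rho[of q] by (simp add: nq)
  have P3: "\<forall>j<n. \<forall>s. povm2 ((\<lambda>_. 2::nat) j) (Emat j s)" by (simp add: povm_Emat)
  have P4: "postsel_prob n (rho n q) Emat ?g x (\<lambda>m. True) > 0
        \<and> postsel_corr n (rho n q) Emat ?g x = (if (\<forall>k<r. x ! k) then 1 else 0)"
    if x: "x \<in> bitstrings r" for x
  proof -
    let ?qp = "\<lambda>m s. qprob n (rho n q) Emat m s"
    let ?C = "\<lambda>m s. \<forall>j<n. s!j = ?g j x m"
    let ?AND = "\<forall>k<r. x ! k"
    have qp_nn: "?qp m s \<ge> 0" for m s
      unfolding qprob_eq by (intro sum_nonneg mult_nonneg_nonneg) (auto simp: Pl_nonneg)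
    have key: "xor_over {..<n} (\<lambda>i. m!i) = ?AND" if C: "?C m s" and nz: "?qp m s \<noteq> 0" for m s
    proof -
      from nz obtain l where l: "l \<in> bitstrings n"
        and t: "Pl q l * (if \<forall>j<n. okr j (l!j) (s!j) (m!j) then 1 else 0) \<noteq> 0"
        unfolding qprob_eq by (meson sum.not_neutral_contains_not_neutral)
      have pl: "Pl q l \<noteq> 0" and ok: "\<forall>j<n. okr j (l!j) (s!j) (m!j)" using t by (auto split: if_splits)
      have pairs: "\<forall>i<q. l!(3*i) = l!(3*i+1)" using Pl_nz[OF pl] .
      have rel: "\<forall>j<3*q. Rel r x m l j" using ok C by (simp add: Rel_def nq n_def q_def)
      have "xor_over {..<3*q} (\<lambda>l. m!l) = (\<forall>k\<le>q. x!k)"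
        by (rule inv[OF assms(1)]) (use q_def q1 rel pairs in auto)
      moreover have "(\<forall>k\<le>q. x!k) = ?AND" using q_def assms by (auto; metis Suc_pred' less_Suc_eq_le q1)
      ultimately show ?thesis by (simp add: nq)
    qed
    have num: "postsel_prob n (rho n q) Emat ?g x (\<lambda>m. xor_over {..<n} (\<lambda>i. m!i))
        = (if ?AND then postsel_prob n (rho n q) Emat ?g x (\<lambda>m. True) else 0)"
    proof -
      have t: "(if xor_over {..<n} (\<lambda>i. m!i) \<and> ?C m s then ?qp m s / 2^n else 0)
          = (if ?AND then (if True \<and> ?C m s then ?qp m s / 2^n else 0) else 0)" for m s
      proof (cases "?C m s \<and> ?qp m s \<noteq> 0")
        case True
        then show ?thesis using key[of s m] by auto
      next
        case False
        then show ?thesis by auto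
      qed
      show ?thesis unfolding postsel_prob_def
        by (cases ?AND) (simp_all only: t, simp_all)
    qed
    obtain m0 l0 where m0: "length m0 = 3*(r-1)" and l0: "length l0 = 3*(r-1)"
      and rel0: "\<forall>j<3*(r-1). Rel r x m0 l0 j" and pairs0: "\<forall>i<r-1. l0!(3*i) = l0!(3*i+1)"
      using exists_good[OF assms(1), of x] by blast
    define s0 where "s0 = map (\<lambda>j. ?g j x m0) [0..<n]"
    have C0: "?C m0 s0" by (simp add: s0_def)
    have ok0: "\<forall>j<n. okr j (l0!j) (s0!j) (m0!j)" using rel0 by (simp add: Rel_def s0_def n_def)
    have qp0: "?qp m0 s0 > 0"
    proof -
      have "0 < Pl q l0 * (if \<forall>j<n. okr j (l0!j) (s0!j) (m0!j) then 1 else 0)"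
        using Pl_pos[of q l0] pairs0 ok0 q_def by simp
      moreover have "l0 \<in> bitstrings n" using l0 by (simp add: bitstrings_def n_def)
      ultimately show ?thesis unfolding qprob_eq
        by (intro sum_pos2[where i = l0]) (auto intro!: mult_nonneg_nonneg simp: Pl_nonneg)
    qed
    have den: "postsel_prob n (rho n q) Emat ?g x (\<lambda>m. True) > 0"
      unfolding postsel_prob_def
    proof (rule sum_pos2[where i = s0])
      show "s0 \<in> bitstrings n" by (simp add: s0_def bitstrings_def)
      show "0 < (\<Sum>m\<in>bitstrings n. if True \<and> ?C m s0 then ?qp m s0 / 2 ^ n else 0)"
      proof (rule sum_pos2[where i = m0])
        show "m0 \<in> bitstrings n" using m0 by (simp add: bitstrings_def n_def)
        show "0 < (if True \<and> ?C m0 s0 then ?qp m0 s0 / 2 ^ n else 0)" using C0 qp0 by simp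
      qed (auto intro: divide_nonneg_pos qp_nn)
    qed (auto intro!: sum_nonneg divide_nonneg_pos qp_nn)
    show ?thesis using den num by (simp add: postsel_corr_def)
  qed
  show ?thesis
    apply (rule exI[where x = "\<lambda>_. 2"], rule exI[where x = "rho n q"], rule exI[where x = Emat])
    apply (rule exI[where x = aa], rule exI[where x = cc], rule exI[where x = bb])
    using P2 P3 P4 by auto
qed


end
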